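(* Let $M\ge 2N-1$. Then for a generic $M$-element frame $\mathcal F$ for $\mathbb R^N$, the map $\mathbb M^{\mathcal F}$ is injective; that is, there is an open dense subset of the set of $M$-element frames for $\mathbb R^N$ such that for every $\mathcal F=\{f_1,\dots,f_M\}$ in it, $|\langle x,f_k\rangle|=|\langle y,f_k\rangle|$ for all $k$ implies $y=\pm x$.
   Context: An $M$-element frame for $\mathbb R^N$ is a family $\{f_1,\dots,f_M\}\subset\mathbb R^N$ spanning $\mathbb R^N$ (equivalently an $N\times M$ real matrix of rank $N$), with the topology induced from its range of coefficients $W=\{(\langle x,f_k\rangle)_k : x\in\mathbb R^N\}$ in the Grassmannian $Gr(N,M)$ of $N$-dimensional subspaces of $\mathbb R^M$. $\mathbb M^{\mathcal F}:\mathbb R^N/\{\pm1\}\to\mathbb R^M$, $\mathbb M^{\mathcal F}(\hat x)=(|\langle x,f_k\rangle|)_{k=1}^M$. *)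

theory Defs
  imports "HOL-Analysis.Analysis"
begin

text \<open>An M-element frame for R^N is represented as an N x M real matrix
  F :: real^'m^'n whose columns f_k = column k F span R^N.\<close>

definition is_frame :: "real^'m^'n \<Rightarrow> bool" where
  "is_frame F \<longleftrightarrow> span (range (\<lambda>k. column k F)) = UNIV"

definition frames :: "(real^'m^'n) set" where
  "frames = {F. is_frame F}"

definition coeff_range :: "real^'m^'n \<Rightarrow> (real^'m) set" where
  "coeff_range F = range (\<lambda>x::real^'n. \<chi> k. x \<bullet> column k F)"

text \<open>Topology on frames induced from the Grassmannian Gr(N,M) via F \<mapsto> W(F).
  The Grassmannian carries its standard topology, i.e. the quotient topology of the
  full-rank matrices (Euclidean topology) under F \<mapsto> W(F).  Hence a set of frames
  is open in the induced (pull-back) topology iff it is of the form W^{-1}(V) with V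
  open in Gr(N,M), iff it is open in the Euclidean subspace topology of the frames
  and saturated (a union of fibres of W).\<close>

definition frame_open :: "(real^'m^'n) set \<Rightarrow> bool" where
  "frame_open U \<longleftrightarrow>
     U \<subseteq> frames \<and>
     openin (top_of_set frames) U \<and>
     (\<forall>F\<in>U. \<forall>G\<in>frames. coeff_range G = coeff_range F \<longrightarrow> G \<in> U)"

definition frame_dense :: "(real^'m^'n) set \<Rightarrow> bool" where
  "frame_dense U \<longleftrightarrow> (\<forall>V. frame_open V \<and> V \<noteq> {} \<longrightarrow> U \<inter> V \<noteq> {})"

end

theory Submission
  imports Defs
begin

definition minor :: "('n \<Rightarrow> 'm) \<Rightarrow> real^'m^'n \<Rightarrow> real^'n^'n" where
  "minor \<sigma> F = (\<chi> i j. F$i$(\<sigma> j))"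

lemma bl_comp: "bounded_linear (\<lambda>F::real^'m^'n. F$i$k)"
  using bounded_linear_compose vec_nth_inject by auto

lemma poly_det: "real_polynomial_function (\<lambda>F::real^'m^'n. det (minor \<sigma> F))"
  unfolding det_def minor_def
  apply (rule real_polynomial_function_sum, simp)
  apply (rule real_polynomial_function.intros(4))
   apply (rule real_polynomial_function.intros(2))
  apply (rule real_polynomial_function_prod, simp)
  apply (simp add: real_polynomial_function.intros(1) bl_comp)
  done

lemma roots_finite:
  fixes p :: "real \<Rightarrow> real"
  assumes "real_polynomial_function p" "p 1 \<noteq> 0"
  shows "finite {t. p t = 0}"
proof -
  obtain a n where p: "p = (\<lambda>x. \<Sum>i\<le>n. a i * x^i)"
    using assms(1) real_polynomial_function_iff_sum by blast
  have "\<exists>k. k \<le> n \<and> a k \<noteq> 0"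
  proof (rule ccontr)
    assume "\<not> ?thesis"
    then have "p 1 = 0" unfolding p by auto
    with assms show False by simp
  qed
  then show ?thesis unfolding p by (rule polyfun_rootbound_finite)
qed

lemma interior_Union_empty:
  fixes \<F> :: "'a::topological_space set set"
  assumes "finite \<F>" "\<And>S. S \<in> \<F> \<Longrightarrow> closed S \<and> interior S = {}"
  shows "interior (\<Union>\<F>) = {}"
  using assms
proof (induction rule: finite_induct)
  case empty then show ?case by simp
next
  case (insert S \<F>)
  then have "interior (S \<union> \<Union>\<F>) = interior S"
    by (intro interior_closed_Un_empty_interior) auto
  with insert show ?case by simp
qed

lemma det0_iff:
  fixes A :: "real^'n^'n"
  shows "det A = 0 \<longleftrightarrow> (\<exists>x. x \<noteq> 0 \<and> x v* A = 0)"
  by (metis Finite_Cartesian_Product.transpose_transpose det_transpose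
    invertible_det_nz invertible_left_inverse matrix_left_invertible_ker
    vector_transpose_matrix)

lemma vm: "(x v* minor \<sigma> F) $ j = x \<bullet> column (\<sigma> j) F"
  by (simp add: vector_matrix_mult_def minor_def column_def inner_vec_def mult.commute)

definition goodP :: "real^'m^'n \<Rightarrow> bool" where
  "goodP F \<longleftrightarrow> (\<forall>x. x \<noteq> 0 \<longrightarrow> card {k. x \<bullet> column k F = 0} < CARD('n))"

definition good :: "real^'m^'n \<Rightarrow> bool" where
  "good F \<longleftrightarrow> (\<forall>\<sigma>::'n\<Rightarrow>'m. inj \<sigma> \<longrightarrow> det (minor \<sigma> F) \<noteq> 0)"

lemma good_imp_P:
  fixes F :: "real^'m^'n"
  assumes "good F" shows "goodP F"
  unfolding goodP_def
proof (intro allI impI)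
  fix x :: "real^'n" assume x: "x \<noteq> 0"
  show "card {k. x \<bullet> column k F = 0} < CARD('n)"
  proof (rule ccontr)
    assume "\<not> ?thesis"
    then have "card (UNIV::'n set) \<le> card {k. x \<bullet> column k F = 0}" by simp
    then obtain \<sigma> :: "'n \<Rightarrow> 'm" where s: "\<sigma> ` UNIV \<subseteq> {k. x \<bullet> column k F = 0}" "inj \<sigma>"
      using card_le_inj[of "UNIV::'n set" "{k. x \<bullet> column k F = 0}"] by auto
    have "x v* minor \<sigma> F = 0"
      using s(1) by (auto simp: vec_eq_iff vm)
    then have "det (minor \<sigma> F) = 0" using det0_iff x by blast
    with assms s(2) show False unfolding good_def by blast
  qed
qed

lemma P_imp_good:
  fixes F :: "real^'m^'n"
  assumes "goodP F" shows "good F"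
  unfolding good_def
proof (intro allI impI)
  fix \<sigma> :: "'n \<Rightarrow> 'm" assume inj: "inj \<sigma>"
  show "det (minor \<sigma> F) \<noteq> 0"
  proof
    assume "det (minor \<sigma> F) = 0"
    then obtain x where x: "x \<noteq> 0" "x v* minor \<sigma> F = 0" using det0_iff by blast
    then have "\<sigma> ` UNIV \<subseteq> {k. x \<bullet> column k F = 0}"
      by (auto simp: vec_eq_iff vm)
    then have "card (\<sigma> ` UNIV) \<le> card {k. x \<bullet> column k F = 0}"
      by (intro card_mono) auto
    then have "CARD('n) \<le> card {k. x \<bullet> column k F = 0}"
      using card_image[OF inj] by simp
    with assms x show False unfolding goodP_def by force
  qed
qed

lemma P_frame:
  fixes F :: "real^'m^'n"
  assumes "CARD('n) \<le> CARD('m)" "goodP F" shows "is_frame F"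
proof (rule ccontr)
  assume "\<not> is_frame F"
  then have "span (range (\<lambda>k. column k F)) \<subset> span UNIV"
    unfolding is_frame_def by auto
  then obtain x :: "real^'n" where x: "x \<noteq> 0"
    "\<And>y. y \<in> span (range (\<lambda>k. column k F)) \<Longrightarrow> orthogonal x y"
    by (rule orthogonal_to_subspace_exists_gen) auto
  then have "\<And>k. x \<bullet> column k F = 0"
    by (meson orthogonal_def rangeI span_base)
  then have "{k. x \<bullet> column k F = 0} = UNIV" by auto
  with assms x show False unfolding goodP_def by force
qed

lemma frame_inj:
  fixes G :: "real^'m^'n"
  assumes "is_frame G" "\<And>k. x \<bullet> column k G = 0" shows "x = 0"
proof -
  have "orthogonal x x"
    by (rule orthogonal_to_span[of x "range (\<lambda>k. column k G)"])
       (use assms in \<open>auto simp: is_frame_def orthogonal_def\<close>)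
  then show ?thesis by (simp add: orthogonal_def)
qed

lemma P_sat:
  fixes F G :: "real^'m^'n"
  assumes "goodP F" "is_frame G" "coeff_range G = coeff_range F"
  shows "goodP G"
  unfolding goodP_def
proof (intro allI impI)
  fix x :: "real^'n" assume x: "x \<noteq> 0"
  have "(\<chi> k. x \<bullet> column k G) \<in> coeff_range F"
    using assms(3) unfolding coeff_range_def by auto
  then obtain y where y: "(\<chi> k. x \<bullet> column k G) = (\<chi> k. y \<bullet> column k F)"
    unfolding coeff_range_def by auto
  then have eq: "\<And>k. x \<bullet> column k G = y \<bullet> column k F" by (simp add: vec_eq_iff)
  have "y \<noteq> 0"
  proof
    assume "y = 0"
    then have "\<And>k. x \<bullet> column k G = 0" using eq by simp
    then show False using frame_inj[OF assms(2)] x by blast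
  qed
  then have "card {k. y \<bullet> column k F = 0} < CARD('n)" using assms(1) unfolding goodP_def by blast
  then show "card {k. x \<bullet> column k G = 0} < CARD('n)" using eq by simp
qed

lemma open_good: "open {F::real^'m^'n. good F}"
proof -
  have "{F::real^'m^'n. good F} = (\<Inter>\<sigma>\<in>{\<sigma>::'n\<Rightarrow>'m. inj \<sigma>}. {F. det (minor \<sigma> F) \<noteq> 0})"
    unfolding good_def by auto
  also have "open \<dots>"
  proof (intro open_INT ballI)
    show "finite {\<sigma>::'n\<Rightarrow>'m. inj \<sigma>}" by simp
    fix \<sigma> :: "'n \<Rightarrow> 'm"
    show "open {F::real^'m^'n. det (minor \<sigma> F) \<noteq> 0}"
    proof -
      have c: "continuous_on UNIV (\<lambda>F::real^'m^'n. det (minor \<sigma> F))"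
        by (intro continuous_at_imp_continuous_on ballI continuous_real_polymonial_function poly_det)
      show ?thesis using open_Collect_neq[OF c continuous_on_const[of UNIV 0]] by simp
    qed
  qed
  finally show ?thesis .
qed

lemma interior_Z:
  fixes \<sigma> :: "'n::finite \<Rightarrow> 'm::finite"
  assumes inj: "inj \<sigma>"
  shows "interior {F::real^'m^'n. det (minor \<sigma> F) = 0} = {}"
proof (rule ccontr)
  assume "interior {F::real^'m^'n. det (minor \<sigma> F) = 0} \<noteq> {}"
  then obtain G where "G \<in> interior {F::real^'m^'n. det (minor \<sigma> F) = 0}" by blast
  then obtain e where e: "e > 0" "ball G e \<subseteq> {F::real^'m^'n. det (minor \<sigma> F) = 0}"
    using mem_interior by blast
  define E :: "real^'m^'n" where "E = (\<chi> i k. if k = \<sigma> i then 1 else 0)"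
  have mE: "minor \<sigma> E = mat 1"
    using inj by (auto simp: minor_def E_def mat_def vec_eq_iff inj_eq)
  define p where "p = (\<lambda>t::real. det (minor \<sigma> (G + t *\<^sub>R (E - G))))"
  have pf: "polynomial_function (\<lambda>t::real. G + t *\<^sub>R (E - G))"
    by (intro polynomial_function_add polynomial_function_const polynomial_function_mult polynomial_function_id)
  have "real_polynomial_function ((\<lambda>F. det (minor \<sigma> F)) \<circ> (\<lambda>t::real. G + t *\<^sub>R (E - G)))"
    by (rule real_polynomial_function_compose[OF pf poly_det])
  then have rp: "real_polynomial_function p" unfolding p_def o_def .
  have "p 1 = 1" unfolding p_def using mE by simp
  then have fin: "finite {t. p t = 0}" using roots_finite rp by simp
  define d where "d = min 1 (e / (norm (E - G) + 1))"
  have "e / (norm (E - G) + 1) > 0" using e by (intro divide_pos_pos) (auto intro: add_nonneg_pos)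
  then have d: "d > 0" by (simp add: d_def)
  have "\<not> {0<..<d} \<subseteq> {t. p t = 0}"
    using fin d infinite_Ioo finite_subset by blast
  then obtain t where "t \<in> {0<..<d}" "t \<notin> {t. p t = 0}" by blast
  then have t: "0 < t" "t < d" "p t \<noteq> 0" by auto
  have "norm (t *\<^sub>R (E - G)) = t * norm (E - G)" using t by simp
  also have "\<dots> \<le> d * norm (E - G)" using t by (intro mult_right_mono) auto
  also have "\<dots> \<le> e / (norm (E - G) + 1) * norm (E - G)"
    unfolding d_def by (intro mult_right_mono) auto
  also have "\<dots> < e"
  proof -
    have n: "norm (E - G) + 1 > 0" by (simp add: add_nonneg_pos)
    have "e * norm (E - G) < e * (norm (E - G) + 1)" using e by simp
    then show ?thesis using n by (simp add: divide_less_eq)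
  qed
  finally have "G + t *\<^sub>R (E - G) \<in> ball G e" by (simp add: dist_norm)
  with e t show False unfolding p_def by auto
qed

lemma dense_good:
  fixes F0 :: "real^'m^'n"
  assumes "CARD('n) \<le> CARD('m)" "e > 0"
  shows "\<exists>G. good G \<and> dist G F0 < e"
proof -
  let ?Z = "(\<lambda>\<sigma>::'n\<Rightarrow>'m. {F::real^'m^'n. det (minor \<sigma> F) = 0}) ` {\<sigma>. inj \<sigma>}"
  have "interior (\<Union>?Z) = {}"
  proof (rule interior_Union_empty)
    show "finite ?Z" by simp
    fix S assume "S \<in> ?Z"
    then obtain \<sigma> :: "'n\<Rightarrow>'m" where "inj \<sigma>" "S = {F. det (minor \<sigma> F) = 0}" by auto
    moreover have "continuous_on UNIV (\<lambda>F::real^'m^'n. det (minor \<sigma> F))"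
      by (intro continuous_at_imp_continuous_on ballI continuous_real_polymonial_function poly_det)
    then have "closed {F::real^'m^'n. det (minor \<sigma> F) = 0}"
      using closed_Collect_eq[OF _ continuous_on_const[of UNIV 0]] by simp
    with calculation show "closed S \<and> interior S = {}"
      using interior_Z by auto
  qed
  then have "\<not> ball F0 e \<subseteq> \<Union>?Z"
    using assms(2) interior_maximal[of "ball F0 e" "\<Union>?Z"] by auto
  then obtain G where "G \<in> ball F0 e" "G \<notin> \<Union>?Z" by blast
  then show ?thesis unfolding good_def by (auto simp: dist_commute)
qed

theorem theorem2p2:
  assumes "CARD('m::finite) \<ge> 2 * CARD('n::finite) - 1"
  shows "\<exists>U :: (real^'m^'n) set. frame_open U \<and> frame_dense U \<and>
           (\<forall>F\<in>U. \<forall>x y :: real^'n.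
              (\<forall>k. \<bar>x \<bullet> column k F\<bar> = \<bar>y \<bullet> column k F\<bar>) \<longrightarrow> y = x \<or> y = - x)"
proof -
  have N1: "CARD('n) \<ge> 1" by (simp add: Suc_leI)
  then have NM: "CARD('n) \<le> CARD('m)" using assms by linarith
  let ?U = "{F::real^'m^'n. good F}"
  have sub: "?U \<subseteq> frames"
  proof
    fix F :: "real^'m^'n" assume "F \<in> ?U"
    then have "goodP F" using good_imp_P by simp
    then show "F \<in> frames" using P_frame[OF NM] unfolding frames_def by simp
  qed
  have op: "frame_open ?U"
    unfolding frame_open_def
  proof (intro conjI ballI impI)
    show "?U \<subseteq> frames" by fact
    show "openin (top_of_set frames) ?U"
      unfolding openin_open using open_good sub by (intro exI[of _ ?U]) auto
  next
    fix F G :: "real^'m^'n" assume "F \<in> ?U" "G \<in> frames" "coeff_range G = coeff_range F"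
    then have "goodP G" using P_sat[of F G] good_imp_P[of F] unfolding frames_def by simp
    then show "G \<in> ?U" using P_imp_good by simp
  qed
  have de: "frame_dense ?U"
    unfolding frame_dense_def
  proof (intro allI impI)
    fix V :: "(real^'m^'n) set" assume V: "frame_open V \<and> V \<noteq> {}"
    then obtain F0 where F0: "F0 \<in> V" by blast
    have "openin (top_of_set frames) V" using V unfolding frame_open_def by blast
    then obtain e where e: "e > 0" "\<And>G. G \<in> frames \<Longrightarrow> dist G F0 < e \<Longrightarrow> G \<in> V"
      using F0 unfolding openin_euclidean_subtopology_iff by blast
    obtain G where G: "good G" "dist G F0 < e" using dense_good[OF NM e(1)] by blast
    then have "G \<in> frames" using sub by auto
    with G e show "?U \<inter> V \<noteq> {}" by auto
  qed
  have inj: "\<forall>F\<in>?U. \<forall>x y :: real^'n.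
              (\<forall>k. \<bar>x \<bullet> column k F\<bar> = \<bar>y \<bullet> column k F\<bar>) \<longrightarrow> y = x \<or> y = - x"
  proof (intro ballI allI impI)
    fix F x y assume F: "F \<in> ?U" and h: "\<forall>k. \<bar>x \<bullet> column k F\<bar> = \<bar>y \<bullet> column k F\<bar>"
    have P: "goodP F" using F good_imp_P by auto
    show "y = x \<or> y = - x"
    proof (rule ccontr)
      assume "\<not> ?thesis"
      then have a: "x - y \<noteq> 0" "x + y \<noteq> 0"
        by (auto simp: add_eq_0_iff)
      let ?S = "{k. (x - y) \<bullet> column k F = 0}"
      let ?T = "{k. (x + y) \<bullet> column k F = 0}"
      have "UNIV = ?S \<union> ?T"
      proof -
        { fix k
          have "x \<bullet> column k F = y \<bullet> column k F \<or> x \<bullet> column k F = - (y \<bullet> column k F)"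
            using h[rule_format, of k] by arith
          then have "k \<in> ?S \<union> ?T" by (auto simp: inner_diff_left inner_add_left) }
        then show ?thesis by blast
      qed
      then have "CARD('m) \<le> card ?S + card ?T"
        using card_Un_le[of ?S ?T] by simp
      moreover have "card ?S < CARD('n)" "card ?T < CARD('n)"
        using P a unfolding goodP_def by blast+
      ultimately show False using assms by linarith
    qed
  qed
  show ?thesis using op de inj by blast
qed

end
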